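(* Let $t$ be an integer with $m=2t+1\geq 11$ and $n=2^m+1$, and let $x$ be an odd integer. Then: (1) if $1\leq x\leq 2^{t+1}-3$, then $x$ is a coset leader; (2) if $2^{t+1}+3\leq x\leq 2^{t+1}+2^{t}-3$, then $x$ is a coset leader; (3) if $2^{t+1}+2^{t}+3\leq x\leq 2^{t+2}-9$, then $x$ is a coset leader; (4) if $x\in\{2^{t+1}-1,\ 2^{t+1}+1,\ 2^{t+1}+2^{t}-1,\ 2^{t+1}+2^{t}+1\}$ or $2^{t+2}-7\leq x\leq 2^{t+2}+7$, then $x$ is not a coset leader.
   Context: For $n=2^m+1$ and an integer $x$, the 2-cyclotomic coset of $x$ modulo $n$ is $C_x=\{x\cdot 2^{j} \bmod n : j\geq 0\}\subseteq\{0,1,\dots,n-1\}$, and $|C_x|$ denotes its cardinality. For $0\leq x\leq n-1$, "$x$ is a coset leader" means that $x$ is the smallest element of $C_x$. *)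

theory Defs
  imports Main
begin

definition cyc_coset :: "nat \<Rightarrow> nat \<Rightarrow> nat set" where
  "cyc_coset n x = {(x * 2 ^ j) mod n | j. True}"

definition coset_leader :: "nat \<Rightarrow> nat \<Rightarrow> bool" where
  "coset_leader n x \<longleftrightarrow> x < n \<and> x = Min (cyc_coset n x)"

end

theory Submission
  imports Defs
begin

lemma zmodI: fixes a q r N :: int
  assumes "a = q*N + r" "0 \<le> r" "r < N" shows "a mod N = r"
  using assms by (simp add: mod_pos_pos_trivial)

lemma caseA: fixes X P b N :: int
  assumes "N = 2*P*P+1" "P \<ge> 32" "1 \<le> X" "X \<le> 4*P-9" "1 \<le> b" "2*b \<le> P"
  shows "X \<le> (X*b) mod N \<and> (X*b) mod N + X \<le> N"
proof -
  have 1: "X*(2*b) \<le> X*P" using assms by (intro mult_left_mono) auto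
  have 2: "X*P \<le> (4*P-9)*P" using assms by (intro mult_right_mono) auto
  have 3: "X*1 \<le> X*b" using assms by (intro mult_left_mono) auto
  have e1: "X*(2*b) = 2*(X*b)" "(4*P-9)*P = 4*(P*P) - 9*P" "N = 2*(P*P)+1" using assms by (auto simp: algebra_simps)
  have 4: "X*b + X \<le> N" using 1 2 e1 assms by linarith
  have "(X*b) mod N = X*b" using 3 4 assms by (intro zmodI[where q=0]) auto
  then show ?thesis using 3 4 by simp
qed

lemma caseB1: fixes X P N :: int
  assumes "N = 2*P*P+1" "P \<ge> 32" "1 \<le> X" "X \<le> 2*P-3"
  shows "X \<le> (X*P) mod N \<and> (X*P) mod N + X \<le> N"
proof -
  have 2: "X*P \<le> (2*P-3)*P" using assms by (intro mult_right_mono) auto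
  have 3: "X*1 \<le> X*P" using assms by (intro mult_left_mono) auto
  have 4: "X*P + X \<le> N" using 2 assms by (simp add: algebra_simps)
  have "(X*P) mod N = X*P" using 3 4 assms by (intro zmodI[where q=0]) auto
  then show ?thesis using 3 4 by simp
qed

lemma caseB2: fixes X P N y :: int
  assumes "N = 2*P*P+1" "P \<ge> 32" "X = 2*P + y" "3 \<le> y" "y \<le> 2*P-9"
  shows "X \<le> (X*P) mod N \<and> (X*P) mod N + X \<le> N"
proof -
  have 1: "0 \<le> (y-3)*(P-1)" using assms by simp
  have 2: "y*P \<le> (2*P-9)*P" using assms by (intro mult_right_mono) auto
  have 3: "y*P - 1 \<ge> X" using 1 assms by (simp add: algebra_simps)
  have 4: "y*P - 1 + X \<le> N" using 2 assms by (simp add: algebra_simps)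
  have "(X*P) mod N = y*P - 1" using 3 4 assms by (intro zmodI[where q=1]) (auto simp: algebra_simps)
  then show ?thesis using 3 4 by simp
qed

lemma caseC0: fixes X P N :: int
  assumes "N = 2*P*P+1" "P \<ge> 32" "1 \<le> X" "X \<le> P-1"
  shows "X \<le> (X*(2*P)) mod N \<and> (X*(2*P)) mod N + X \<le> N"
proof -
  have 2: "X*P \<le> (P-1)*P" using assms by (intro mult_right_mono) auto
  have 3: "X*1 \<le> X*(2*P)" using assms by (intro mult_left_mono) auto
  have 4: "X*(2*P) + X \<le> N" using 2 assms by (simp add: algebra_simps)
  have "(X*(2*P)) mod N = X*(2*P)" using 3 4 assms by (intro zmodI[where q=0]) auto
  then show ?thesis using 3 4 by simp
qed

lemma caseC: fixes X P N y h :: int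
  assumes "N = 2*P*P+1" "P \<ge> 32" "X = h*P + y" "1 \<le> h" "h \<le> 3" "h \<le> y" "y \<le> P-3"
  shows "X \<le> (X*(2*P)) mod N \<and> (X*(2*P)) mod N + X \<le> N"
proof -
  have 1: "0 \<le> (y-h)*(2*P-1)" using assms by simp
  have 2: "y*P \<le> (P-3)*P" using assms by (intro mult_right_mono) auto
  have 5: "h*32 \<le> h*P" using assms by (intro mult_left_mono) auto
  have 6: "h*P \<le> 3*P" using assms by (intro mult_right_mono) auto
  have e: "(y-h)*(2*P-1) = 2*(P*y) - y - 2*(h*P) + h" "X = h*P + y" using assms by (auto simp: algebra_simps)
  have 3: "2*(P*y) - h \<ge> X" using 1 5 e assms by linarith
  have e2: "y*P = P*y" "(P-3)*P = P*P - 3*P" "N = 2*(P*P)+1" using assms by (auto simp: algebra_simps)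
  have 4: "2*(P*y) - h + X \<le> N" using 2 6 e e2 assms by linarith
  have eq: "X*(2*P) = h*N + (2*(P*y) - h)" using assms by (simp add: algebra_simps)
  have "(X*(2*P)) mod N = 2*(P*y) - h" by (rule zmodI[OF eq]) (use 3 4 5 e assms in linarith)+
  then show ?thesis using 3 4 by simp
qed

lemma caseD: fixes X a b N :: int
  assumes "a*b = N - 1" "a \<ge> 1" "even a" "odd X" "0 \<le> X" "X < b" "X + X div a \<le> b"
  shows "X \<le> (X*b) mod N \<and> (X*b) mod N + X \<le> N"
proof -
  define h where "h = X div a"
  define c where "c = X mod a"
  have Xe: "X = h*a + c" unfolding h_def c_def by simp
  have c0: "0 \<le> c" "c < a" unfolding c_def using assms by auto
  have "c \<noteq> 0" proof
    assume "c = 0" then have "a dvd X" unfolding c_def by auto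
    then show False using assms by (meson dvd_trans)
  qed
  then have c1: "1 \<le> c" using c0 by simp
  have h0: "0 \<le> h" unfolding h_def using assms by (simp add: pos_imp_zdiv_nonneg_iff)
  have b0: "b > 0" using assms by simp
  have cb1: "1*b \<le> c*b" using c1 b0 by (intro mult_right_mono) auto
  have cb2: "c*b \<le> (a-1)*b" using c0 b0 by (intro mult_right_mono) auto
  have Ne: "N = a*b+1" using assms(1) by simp
  have eq: "X*b = h*N + (c*b - h)" unfolding Ne Xe by (simp add: algebra_simps)
  have xh: "X + h \<le> b" using assms(7) h_def by simp
  have r1: "c*b - h \<ge> X" using cb1 xh by linarith
  have r2: "c*b - h + X \<le> N" using cb2 assms h0 by (simp add: algebra_simps)
  have "X \<noteq> 0" using assms by auto
  then have "(X*b) mod N = c*b - h" using eq r1 r2 assms h0 by (intro zmodI[where q=h]) auto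
  then show ?thesis using r1 r2 by simp
qed

lemma div_small: fixes X a :: int assumes "a \<ge> 1" "0 \<le> X" "X < k*a"
  shows "X div a < k"
proof (rule ccontr)
  assume "\<not> X div a < k"
  then have "k*a \<le> (X div a)*a" using assms by (intro mult_right_mono) auto
  moreover have "(X div a)*a + X mod a = X" by simp
  moreover have "0 \<le> X mod a" using assms by simp
  ultimately show False using assms by linarith
qed

lemma div_le_self_int: fixes X a :: int assumes "a \<ge> 1" "0 \<le> X" shows "X div a \<le> X"
proof -
  have "X div a \<le> X div 1" using assms by (intro zdiv_mono2) auto
  then show ?thesis by simp
qed

lemma KL: fixes t j :: nat and X P N :: int
  assumes "P = 2^t" "t \<ge> 5" "N = 2*P*P+1" "odd X"
    "(1 \<le> X \<and> X \<le> 2*P-3) \<or> (2*P+3 \<le> X \<and> X \<le> 3*P-3) \<or> (3*P+3 \<le> X \<and> X \<le> 4*P-9)"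
    "j < 2*t+1"
  shows "X \<le> (X*2^j) mod N \<and> (X*2^j) mod N + X \<le> N"
proof -
  have P32: "P \<ge> 32" using assms(1,2) power_increasing[of 5 t "2::int"] by simp
  have Pev: "even P" using assms(1,2) by simp
  have XP: "X \<noteq> P" "X \<noteq> 2*P" "X \<noteq> 3*P" using Pev assms(4) by auto
  consider "j < t" | "j = t" | "j = t+1" | "j = t+2" | "j \<ge> t+3" "j < 2*t+1" using assms(6) by linarith
  then show ?thesis
  proof cases
    case 1
    have "(2::int)^(j+1) \<le> 2^t" using 1 by (intro power_increasing) auto
    then have "2*(2::int)^j \<le> P" using assms(1) by simp
    moreover have "(1::int) \<le> 2^j" by simp
    ultimately show ?thesis using assms P32 by (intro caseA) auto
  next
    case 2
    then have e: "(2::int)^j = P" using assms(1) by simp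
    show ?thesis
    proof (cases "X \<le> 2*P-3")
      case True then show ?thesis unfolding e using assms P32 by (intro caseB1) auto
    next
      case False then show ?thesis unfolding e using assms P32 by (intro caseB2[where y="X-2*P"]) auto
    qed
  next
    case 3
    then have e: "(2::int)^j = 2*P" using assms(1) by simp
    consider "X \<le> P - 1" | "P+1 \<le> X \<and> X \<le> 2*P-3" | "2*P+3 \<le> X \<and> X \<le> 3*P-3" | "3*P+3 \<le> X \<and> X \<le> 4*P-9"
      using assms(5) XP by linarith
    then show ?thesis
    proof cases
      case 1 then show ?thesis unfolding e using assms P32 by (intro caseC0) auto
    next
      case 2 then show ?thesis unfolding e using assms P32 by (intro caseC[where h=1 and y="X-P"]) auto
    next
      case 3 then show ?thesis unfolding e using assms P32 by (intro caseC[where h=2 and y="X-2*P"]) auto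
    next
      case 4 then show ?thesis unfolding e using assms P32 by (intro caseC[where h=3 and y="X-3*P"]) auto
    qed
  next
    case 4
    define a :: int where "a = 2^(t-1)"
    have Pa: "P = 2*a" unfolding a_def assms(1) using assms(2)
      by (metis Suc_diff_1 less_le_trans numeral_less_iff power_Suc semiring_norm(76) zero_less_numeral)
    have b: "(2::int)^j = 4*P" using 4 assms(1) by (simp add: power_add)
    have a1: "a \<ge> 1" "even a" unfolding a_def using assms(2) by auto
    have ab: "a * 2^j = N - 1" using b Pa assms(3) by simp
    have X0: "0 \<le> X" "X \<le> 4*P-9" using assms(5) P32 by auto
    have "X div a < 8" using X0 Pa a1 by (intro div_small) auto
    then show ?thesis using ab a1 X0 assms(4) b by (intro caseD[where a=a]) auto
  next
    case 5
    define a :: int where "a = 2^(2*t+1-j)"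
    have ab0: "a * 2^j = 2^(2*t+1)" unfolding a_def using 5 by (simp flip: power_add)
    have "(2::int)^(2*t+1) = 2^(t+t) * 2" by (simp only: mult_2 power_add power_one_right)
    also have "\<dots> = 2*P*P" using assms(1) by (simp only: power_add)
    finally have "(2::int)^(2*t+1) = 2*P*P" .
    then have ab: "a * 2^j = N - 1" using ab0 assms(3) by simp
    have a1: "a \<ge> 1" "even a" unfolding a_def using 5 by auto
    have "(2::int)^(t+3) \<le> 2^j" using 5 by (intro power_increasing) auto
    then have b: "8*P \<le> 2^j" using assms(1) by (simp add: power_add)
    have X0: "0 \<le> X" "X \<le> 4*P-9" using assms(5) P32 by auto
    have "X div a \<le> X" using X0 a1 by (intro div_le_self_int) auto
    then show ?thesis using ab a1 X0 assms(4) b by (intro caseD[where a=a]) auto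
  qed
qed

lemma pow2m: fixes n m :: nat assumes "n = 2^m+1" shows "2^(2*m) mod n = 1"
proof -
  have e: "(2::nat)^(2*m) = 2^m*2^m" by (simp add: mult_2 power_add)
  obtain q where q: "(2::nat)^m = Suc q" by (metis not0_implies_Suc power_not_zero zero_neq_numeral)
  have "(2::nat)^(2*m) = (2^m - 1)*n + 1" unfolding assms e q by (simp add: algebra_simps)
  moreover have "(1 + (2^m-1)*n) mod n = 1 mod n" by (rule mod_mult_self1)
  moreover have "n > 1" using assms by simp
  ultimately show ?thesis by (simp add: add.commute)
qed

lemma period: fixes n m x k :: nat assumes "n = 2^m+1"
  shows "x*2^k mod n = x*2^(k mod (2*m)) mod n"
proof -
  have "(2::nat)^k = 2^(k mod (2*m)) * (2^(2*m))^(k div (2*m))"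
    by (metis add.commute mult.commute div_mult_mod_eq power_add power_mult)
  then have "x*2^k = x*2^(k mod (2*m)) * (2^(2*m))^(k div (2*m))" by simp
  moreover have "((2::nat)^(2*m))^(k div (2*m)) mod n = 1"
  proof -
    have "((2::nat)^(2*m))^(k div (2*m)) mod n = ((2^(2*m)) mod n)^(k div (2*m)) mod n"
      by (simp add: power_mod)
    also have "\<dots> = 1 mod n" using pow2m[OF assms] by simp
    also have "\<dots> = 1" using assms by simp
    finally show ?thesis .
  qed
  ultimately show ?thesis by (metis mod_mult_right_eq mult.right_neutral)
qed

lemma negl: fixes n m x i r :: nat assumes "n = 2^m+1" "x*2^i mod n = r" "r > 0"
  shows "x*2^(m+i) mod n = n - r"
proof -
  define A where "A = int (x*2^i)"
  define N where "N = int n"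
  have rN: "r < n" using assms by (metis mod_less_divisor zero_less_Suc add.commute plus_1_eq_Suc)
  have "int (x*2^(m+i)) = A * (N - 1)" unfolding A_def N_def assms(1) by (simp add: power_add)
  also have "\<dots> = (-A) + A*N" by (simp add: algebra_simps)
  finally have eqA: "int (x*2^(m+i)) = (-A) + A*N" .
  have "int (x*2^(m+i)) mod N = (-A) mod N" unfolding eqA by (rule mod_mult_self1)
  have "A mod N = int (x*2^i mod n)" unfolding A_def N_def by (rule of_nat_mod[symmetric])
  then have Ar: "A mod N = int r" using assms(2) by simp
  have "(-A) mod N = N - A mod N" using assms Ar by (simp add: zmod_zminus1_eq_if)
  then have "int (x*2^(m+i)) mod N = N - int r" using Ar \<open>int (x*2^(m+i)) mod N = (-A) mod N\<close> by simp
  then have "int (x*2^(m+i) mod n) = int (n - r)" using rN unfolding N_def by (simp add: of_nat_mod of_nat_diff)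
  then show ?thesis by simp
qed

lemma all_ge: fixes n m x :: nat assumes "n = 2^m+1" "x \<ge> 1" "m > 0"
  "\<And>j. j < m \<Longrightarrow> x \<le> x*2^j mod n \<and> x*2^j mod n + x \<le> n"
  shows "x \<le> x*2^k mod n"
proof -
  define j where "j = k mod (2*m)"
  have km: "x*2^k mod n = x*2^j mod n" unfolding j_def by (rule period[OF assms(1)])
  have "m > 0" using assms by simp
  then have j2: "j < 2*m" unfolding j_def by simp
  show ?thesis
  proof (cases "j < m")
    case True then show ?thesis using km assms(4) by simp
  next
    case False
    define i where "i = j - m"
    have ji: "j = m + i" "i < m" using False j2 unfolding i_def by auto
    have r: "x \<le> x*2^i mod n" "x*2^i mod n + x \<le> n" using assms(4)[OF ji(2)] by auto
    have "x*2^j mod n = n - x*2^i mod n" unfolding ji(1) using r assms(2)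
      by (intro negl[OF assms(1)]) auto
    then show ?thesis using km r by simp
  qed
qed

lemma leaderI: fixes n x :: nat assumes "x < n" "\<And>k. x \<le> x*2^k mod n"
  shows "coset_leader n x"
proof -
  have fin: "finite (cyc_coset n x)"
    by (rule finite_subset[of _ "{..<n}"]) (use assms(1) in \<open>auto simp: cyc_coset_def\<close>)
  have mem: "x \<in> cyc_coset n x" unfolding cyc_coset_def using assms(1)
    by (auto intro!: exI[of _ 0])
  have "Min (cyc_coset n x) = x"
    by (rule Min_eqI[OF fin]) (use assms(2) mem in \<open>auto simp: cyc_coset_def\<close>)
  then show ?thesis unfolding coset_leader_def using assms(1) by simp
qed

lemma not_leaderI: fixes n x k :: nat assumes "x*2^k mod n < x" "n > 0"
  shows "\<not> coset_leader n x"
proof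
  assume L: "coset_leader n x"
  have fin: "finite (cyc_coset n x)"
    by (rule finite_subset[of _ "{..<n}"]) (use assms(2) in \<open>auto simp: cyc_coset_def\<close>)
  have "x*2^k mod n \<in> cyc_coset n x" unfolding cyc_coset_def by auto
  then have "Min (cyc_coset n x) \<le> x*2^k mod n" using fin by simp
  then show False using L assms(1) unfolding coset_leader_def by simp
qed

lemma natmod: fixes a n r :: nat and q :: int
  assumes "int a = q*int n + int r" "r < n" shows "a mod n = r"
proof -
  have "int a mod int n = int r" using assms by (intro zmodI[where q=q]) auto
  then have "int (a mod n) = int r" by (simp add: of_nat_mod)
  then show ?thesis by simp
qed

lemma pw: "(2::nat)^(2*t+1) = 2*2^t*2^t"
  by (simp only: mult_2 power_add power_one_right) simp

lemma leader_main: fixes t n x p :: nat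
  assumes "p = 2^t" "t \<ge> 5" "n = 2^(2*t+1)+1" "odd x"
    "(1 \<le> x \<and> x + 3 \<le> 2*p) \<or> (2*p+3 \<le> x \<and> x + 3 \<le> 3*p) \<or> (3*p+3 \<le> x \<and> x + 9 \<le> 4*p)"
  shows "coset_leader n x"
proof -
  have n2: "n = 2*p*p+1" using assms(1,3) pw by simp
  have KLn: "x \<le> x*2^j mod n \<and> x*2^j mod n + x \<le> n" if j: "j < 2*t+1" for j
  proof -
    have "int x \<le> int x * 2^j mod int n \<and> int x * 2^j mod int n + int x \<le> int n"
    proof (rule KL[where P="int p" and t=t])
      show "int p = 2^t" using assms(1) by simp
      show "int n = 2 * int p * int p + 1" using n2 by simp
      show "(1 \<le> int x \<and> int x \<le> 2 * int p - 3) \<or> (2 * int p + 3 \<le> int x \<and> int x \<le> 3 * int p - 3) \<or>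
        (3 * int p + 3 \<le> int x \<and> int x \<le> 4 * int p - 9)"
        using assms(5) by (elim disjE conjE) linarith+
    qed (use assms j in auto)
    moreover have "int (x*2^j mod n) = int x * 2^j mod int n" by (simp add: of_nat_mod)
    ultimately show ?thesis by linarith
  qed
  have x1: "x \<ge> 1" using assms(4) by (cases x) auto
  have p32: "p \<ge> 32" using assms(1,2) power_increasing[of 5 t "2::nat"] by simp
  have "2*p*2 \<le> 2*p*p" using p32 by (intro mult_left_mono) auto
  then have xn: "x < n" using assms(5) n2 by linarith
  show ?thesis
    by (rule leaderI[OF xn]) (rule all_ge[OF assms(3) x1 _ KLn], auto)
qed

lemma nonleader_main: fixes t n x p :: nat
  assumes "p = 2^t" "t \<ge> 5" "n = 2^(2*t+1)+1" "odd x"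
    "x = 2*p-1 \<or> x = 2*p+1 \<or> x = 3*p-1 \<or> x = 3*p+1 \<or> (4*p \<le> x + 7 \<and> x \<le> 4*p+7)"
  shows "\<not> coset_leader n x"
proof -
  define m where "m = 2*t+1"
  have nm: "n = 2^m+1" using assms(3) m_def by simp
  have n2: "n = 2*p*p+1" using assms(1,3) pw by simp
  have p32: "p \<ge> 32" using assms(1,2) power_increasing[of 5 t "2::nat"] by simp
  have pp: "p*32 \<le> p*p" using p32 by (intro mult_left_mono) auto
  have n0: "n > 0" using n2 by simp
  define P where "P = int p"
  have P32: "P \<ge> 32" using p32 P_def by simp
  have N: "int n = 2*P*P+1" using n2 P_def by simp
  have ppi: "P*32 \<le> P*P" using pp P_def by (metis of_nat_le_iff of_nat_mult of_nat_numeral)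
  have tP: "(2::int)^t = P" "int p = P" using assms(1) P_def by auto
  have n3: "n = 2*(p*p)+1" using n2 by simp
  have pn: "2*p + 3 \<le> n" using n3 pp p32 by linarith
  have pn2: "2*p + 3 < n" using n3 pp p32 by linarith
  consider "x = 2*p-1" | "x = 2*p+1" | "x = 3*p-1" | "x = 3*p+1" | "4*p \<le> x + 7" "x < 4*p" | "4*p < x" "x \<le> 4*p+7"
  proof -
    have "x \<noteq> 4*p" using assms(4) by auto
    then show ?thesis using assms(5) that by linarith
  qed
  then show ?thesis
  proof cases
    case 1
    have X: "int x = 2*P - 1" using 1 p32 P_def by linarith
    have d: "int (n - p - 1) = int n - int p - 1" using pn by linarith
    have r: "x*2^t mod n = n - p - 1"
    proof (rule natmod[where q=0])
      have "int (x*2^t) = int x * (P)" using tP by simp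
      then show "int (x*2^t) = 0*int n + int (n - p - 1)" unfolding d X N by (simp add: algebra_simps tP)
      show "n - p - 1 < n" using pn p32 by linarith
    qed
    have "x*2^(m+t) mod n = n - (n - p - 1)" using r pn2 by (intro negl[OF nm]) auto
    then show ?thesis using 1 n2 p32 pp n0 by (intro not_leaderI[where k="m+t"]) auto
  next
    case 2
    have X: "int x = 2*P + 1" using 2 P_def by simp
    have d: "int (p - 1) = int p - 1" using p32 by linarith
    have r: "x*2^t mod n = p - 1"
    proof (rule natmod[where q=1])
      have "int (x*2^t) = int x * (P)" using tP by simp
      then show "int (x*2^t) = 1*int n + int (p - 1)" unfolding d X N by (simp add: algebra_simps tP)
      show "p - 1 < n" using pn p32 by linarith
    qed
    then show ?thesis using 2 n0 by (intro not_leaderI[where k="t"]) auto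
  next
    case 3
    have X: "int x = 3*P - 1" using 3 p32 P_def by linarith
    have d: "int (n - 2*p - 3) = int n - 2*int p - 3" using pn by linarith
    have r: "x*2^(t+1) mod n = n - 2*p - 3"
    proof (rule natmod[where q=2])
      have "int (x*2^(t+1)) = int x * (2*P)" using tP by simp
      then show "int (x*2^(t+1)) = 2*int n + int (n - 2*p - 3)" unfolding d X N by (simp add: algebra_simps tP)
      show "n - 2*p - 3 < n" using pn p32 by linarith
    qed
    have "x*2^(m+(t+1)) mod n = n - (n - 2*p - 3)" using r pn2 by (intro negl[OF nm]) auto
    then show ?thesis using 3 n2 p32 pp n0 by (intro not_leaderI[where k="m+(t+1)"]) auto
  next
    case 4
    have X: "int x = 3*P + 1" using 4 P_def by simp
    have d: "int (2*p - 3) = 2*int p - 3" using p32 by linarith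
    have r: "x*2^(t+1) mod n = 2*p - 3"
    proof (rule natmod[where q=3])
      have "int (x*2^(t+1)) = int x * (2*P)" using tP by simp
      then show "int (x*2^(t+1)) = 3*int n + int (2*p - 3)" unfolding d X N by (simp add: algebra_simps tP)
      show "2*p - 3 < n" using pn p32 by linarith
    qed
    then show ?thesis using 4 n0 p32 by (intro not_leaderI[where k="t+1"]) auto
  next
    case 5
    define q where "q = (2::nat)^(t-1)"
    have pq: "p = 2*q" unfolding q_def assms(1) using assms(2)
      by (metis Suc_diff_1 less_le_trans numeral_less_iff power_Suc semiring_norm(76) zero_less_numeral)
    have tq: "(2::nat)^(t-1) = q" using q_def by simp
    have q16: "q \<ge> 16" using pq p32 by simp
    have nq: "n = 8*(q*q)+1" using n2 pq by (simp add: algebra_simps)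
    have a: "x*q < (8*q)*q" using 5 pq q16 by (intro mult_strict_right_mono) auto
    have b: "(8*q)*q = 8*(q*q)" by simp
    have lt: "x*q < n" using a b nq by linarith
    have r: "x*2^(t-1) mod n = x*q" using lt tq by simp
    have x1: "x \<ge> 1" using assms(4) by (cases x) auto
    have "1*1 \<le> x*q" using x1 q16 by (intro mult_le_mono) auto
    then have "x*2^(m+(t-1)) mod n = n - x*q" using r by (intro negl[OF nm]) auto
    moreover have "n - x*q < x"
    proof -
      have "(8*q)*q \<le> (x+7)*q" using 5 pq by (intro mult_right_mono) auto
      moreover have "(8*q)*q = 8*(q*q)" "(x+7)*q = x*q + 7*q" by (simp_all add: algebra_simps)
      ultimately have "8*(q*q) \<le> x*q + 7*q" by linarith
      then show ?thesis using nq 5 pq q16 by linarith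
    qed
    ultimately show ?thesis using n0 by (intro not_leaderI[where k="m+(t-1)"]) auto
  next
    case 6
    define q where "q = (2::nat)^(t-1)"
    have pq: "p = 2*q" unfolding q_def assms(1) using assms(2)
      by (metis Suc_diff_1 less_le_trans numeral_less_iff power_Suc semiring_norm(76) zero_less_numeral)
    have tq: "(2::nat)^(t-1) = q" using q_def by simp
    have q16: "q \<ge> 16" using pq p32 by simp
    have nq: "n = 8*(q*q)+1" using n2 pq by (simp add: algebra_simps)
    define D where "D = x - 8*q"
    have xD: "x = 8*q + D" "1 \<le> D" "D \<le> 7" using 6 pq D_def by auto
    have xq: "x*q = 8*(q*q) + D*q" using xD by (simp add: algebra_simps)
    have Dq: "1*1 \<le> D*q" "D*q \<le> 7*q" using xD q16 by (intro mult_le_mono mult_right_mono; simp)+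
    have r: "x*2^(t-1) mod n = D*q - 1"
    proof (rule natmod[where q=1])
      have "x*2^(t-1) = n + (D*q - 1)" using xq nq Dq tq by simp
      then show "int (x*2^(t-1)) = 1*int n + int (D*q - 1)" by simp
      have "q*1 \<le> q*q" using q16 by (intro mult_le_mono2) auto
      then show "D*q - 1 < n" using nq Dq q16 by linarith
    qed
    moreover have "D*q - 1 < x" using Dq xD q16 by linarith
    ultimately show ?thesis using n0 by (intro not_leaderI[where k="t-1"]) auto
  qed
qed

theorem theorem3p1:
  fixes t m n x :: nat
  assumes "m = 2 * t + 1" and "m \<ge> 11" and "n = 2 ^ m + 1" and "odd x"
  shows "(1 \<le> x \<and> x \<le> 2 ^ (t + 1) - 3 \<longrightarrow> coset_leader n x)
     \<and> (2 ^ (t + 1) + 3 \<le> x \<and> x \<le> 2 ^ (t + 1) + 2 ^ t - 3 \<longrightarrow> coset_leader n x)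
     \<and> (2 ^ (t + 1) + 2 ^ t + 3 \<le> x \<and> x \<le> 2 ^ (t + 2) - 9 \<longrightarrow> coset_leader n x)
     \<and> ((x \<in> {2 ^ (t + 1) - 1, 2 ^ (t + 1) + 1, 2 ^ (t + 1) + 2 ^ t - 1, 2 ^ (t + 1) + 2 ^ t + 1}
          \<or> (2 ^ (t + 2) - 7 \<le> x \<and> x \<le> 2 ^ (t + 2) + 7)) \<longrightarrow> \<not> coset_leader n x)"
proof -
  define p :: nat where "p = 2^t"
  have t5: "t \<ge> 5" using assms(1,2) by simp
  have p32: "p \<ge> 32" using t5 power_increasing[of 5 t "2::nat"] p_def by simp
  have e1: "(2::nat)^(t+1) = 2*p" "(2::nat)^(t+2) = 4*p" "(2::nat)^t = p" using p_def by auto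
  have nn: "n = 2^(2*t+1)+1" using assms(1,3) by simp
  have L: "coset_leader n x" if "(1 \<le> x \<and> x + 3 \<le> 2*p) \<or> (2*p+3 \<le> x \<and> x + 3 \<le> 3*p) \<or> (3*p+3 \<le> x \<and> x + 9 \<le> 4*p)"
    by (rule leader_main[OF p_def t5 nn assms(4) that])
  have NL: "\<not> coset_leader n x" if "x = 2*p-1 \<or> x = 2*p+1 \<or> x = 3*p-1 \<or> x = 3*p+1 \<or> (4*p \<le> x + 7 \<and> x \<le> 4*p+7)"
    by (rule nonleader_main[OF p_def t5 nn assms(4) that])
  show ?thesis unfolding e1
  proof (intro conjI impI)
    assume "1 \<le> x \<and> x \<le> 2 * p - 3" then show "coset_leader n x" using p32 by (intro L) linarith
  next
    assume "2 * p + 3 \<le> x \<and> x \<le> 2 * p + p - 3" then show "coset_leader n x" using p32 by (intro L) linarith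
  next
    assume "2 * p + p + 3 \<le> x \<and> x \<le> 4 * p - 9" then show "coset_leader n x" using p32 by (intro L) linarith
  next
    assume "x \<in> {2 * p - 1, 2 * p + 1, 2 * p + p - 1, 2 * p + p + 1} \<or> 4 * p - 7 \<le> x \<and> x \<le> 4 * p + 7"
    then show "\<not> coset_leader n x" using p32 by (intro NL) auto
  qed
qed

end
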